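(* Let $n\ge 1$ and let $\xi=(\xi^1,\ldots,\xi^n)\in\mathbb{Z}^n\setminus\{0\}$. Let $k$ be the number of non-zero coordinates of $\xi$; write $\xi^{i_1},\ldots,\xi^{i_k}\neq 0$ with $i_1<\cdots<i_k$, and $\xi^{j_1}=\cdots=\xi^{j_{n-k}}=0$ with $j_1<\cdots<j_{n-k}$. Fix $\bar s\in\{1,\ldots,k\}$ and define vectors $\xi_1,\ldots,\xi_n\in\mathbb{Z}^n$ as follows: - $\xi_1=\xi$; - for $p=2,\ldots,k-\bar s+1$: $\xi_p^{i_{\bar s-1+p}}=-\xi^{i_{\bar s-1+p}}$ and $\xi_p^i=\xi^i$ for all other indices $i$; - for $p=k-\bar s+2,\ldots,k$: $\xi_p^{i_{\bar s-1+p-k}}=-\xi^{i_{\bar s-1+p-k}}$ and $\xi_p^i=\xi^i$ for all other indices $i$; - for $p=k+1,\ldots,n$: $\xi_p^{i_{\bar s}}=0$, $\xi_p^{j_{p-k}}=\xi^{i_{\bar s}}$, and $\xi_p^i=\xi^i$ for all other indices $i$. Then the vectors $\xi_1,\ldots,\xi_n$ are linearly independent.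
   Context: Here $\xi_p^i$ denotes the $i$-th coordinate of the vector $\xi_p$. *)

theory Defs
  imports Complex_Main
begin

text \<open>Vectors in Z^n are functions nat => int, coordinates indexed by 1..n
  (values outside 1..n are irrelevant).\<close>

definition nz_set :: "nat \<Rightarrow> (nat \<Rightarrow> int) \<Rightarrow> nat set" where
  "nz_set n \<xi> = {i \<in> {1..n}. \<xi> i \<noteq> 0}"

definition z_set :: "nat \<Rightarrow> (nat \<Rightarrow> int) \<Rightarrow> nat set" where
  "z_set n \<xi> = {i \<in> {1..n}. \<xi> i = 0}"

definition nz_idx :: "nat \<Rightarrow> (nat \<Rightarrow> int) \<Rightarrow> nat \<Rightarrow> nat" where
  "nz_idx n \<xi> m = sorted_list_of_set (nz_set n \<xi>) ! (m - 1)"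

definition z_idx :: "nat \<Rightarrow> (nat \<Rightarrow> int) \<Rightarrow> nat \<Rightarrow> nat" where
  "z_idx n \<xi> m = sorted_list_of_set (z_set n \<xi>) ! (m - 1)"

definition xi_vec :: "nat \<Rightarrow> (nat \<Rightarrow> int) \<Rightarrow> nat \<Rightarrow> nat \<Rightarrow> (nat \<Rightarrow> int)" where
  "xi_vec n \<xi> s p =
     (let k = card (nz_set n \<xi>); i = nz_idx n \<xi>; j = z_idx n \<xi> in
      if p = 1 then \<xi>
      else if 2 \<le> p \<and> p \<le> k - s + 1 then \<xi>(i (s - 1 + p) := - \<xi> (i (s - 1 + p)))
      else if k - s + 2 \<le> p \<and> p \<le> k then \<xi>(i (s - 1 + p - k) := - \<xi> (i (s - 1 + p - k)))
      else \<xi>(i s := 0, j (p - k) := \<xi> (i s)))"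

definition lin_indep_family :: "nat \<Rightarrow> nat \<Rightarrow> (nat \<Rightarrow> nat \<Rightarrow> int) \<Rightarrow> bool" where
  "lin_indep_family n m v \<longleftrightarrow>
     (\<forall>c :: nat \<Rightarrow> real.
        (\<forall>i \<in> {1..n}. (\<Sum>p = 1..m. c p * real_of_int (v p i)) = 0) \<longrightarrow>
        (\<forall>p \<in> {1..m}. c p = 0))"

end

theory Submission
  imports Defs
begin

lemma fin_nz: "finite (nz_set n \<xi>)" unfolding nz_set_def by auto
lemma fin_z: "finite (z_set n \<xi>)" unfolding z_set_def by auto

lemma card_z: "card (z_set n \<xi>) = n - card (nz_set n \<xi>)"
proof -
  have "z_set n \<xi> \<union> nz_set n \<xi> = {1..n}" "z_set n \<xi> \<inter> nz_set n \<xi> = {}"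
    unfolding z_set_def nz_set_def by auto
  then have "card (z_set n \<xi>) + card (nz_set n \<xi>) = n"
    using card_Un_disjoint[OF fin_z[of n \<xi>] fin_nz[of n \<xi>]] by simp
  then show ?thesis by simp
qed

lemma sl_mem:
  assumes "finite A" "m \<in> {1..card A}"
  shows "sorted_list_of_set A ! (m - 1) \<in> A"
proof -
  have "m - 1 < length (sorted_list_of_set A)" using assms by auto
  then have "sorted_list_of_set A ! (m - 1) \<in> set (sorted_list_of_set A)" by (rule nth_mem)
  then show ?thesis using assms(1) by simp
qed

lemma sl_inj:
  assumes "m \<in> {1..card A}" "m' \<in> {1..card A}"
    "sorted_list_of_set A ! (m - 1) = sorted_list_of_set A ! (m' - 1)"
  shows "m = m'"
proof -
  have "m - 1 = m' - 1"
    using nth_eq_iff_index_eq[OF distinct_sorted_list_of_set, of "m - 1" A "m' - 1"] assms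
    by auto
  then show ?thesis using assms by auto
qed

theorem lemma3p1:
  fixes n :: nat and \<xi> :: "nat \<Rightarrow> int" and s :: nat
  assumes "n \<ge> 1"
    and "\<exists>i \<in> {1..n}. \<xi> i \<noteq> 0"
    and "1 \<le> s" and "s \<le> card (nz_set n \<xi>)"
  shows "lin_indep_family n n (xi_vec n \<xi> s)"
proof -
  define k where "k = card (nz_set n \<xi>)"
  define I where "I = nz_idx n \<xi>"
  define J where "J = z_idx n \<xi>"
  define g where "g p = (if p \<le> k - s + 1 then s - 1 + p else s - 1 + p - k)" for p
  define v where "v = xi_vec n \<xi> s"
  have k1: "1 \<le> k" "s \<le> k" using assms(3,4) k_def by auto
  have kn: "k \<le> n"
  proof -
    have "nz_set n \<xi> \<subseteq> {1..n}" unfolding nz_set_def by auto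
    then have "card (nz_set n \<xi>) \<le> card {1..n}" by (rule card_mono[rotated]) simp
    then show ?thesis unfolding k_def by simp
  qed
  have Imem: "I m \<in> {1..n} \<and> \<xi> (I m) \<noteq> 0" if "m \<in> {1..k}" for m
    using sl_mem[OF fin_nz, of m n \<xi>] that unfolding I_def nz_idx_def k_def
    by (auto simp: nz_set_def)
  have Iinj: "m = m'" if "m \<in> {1..k}" "m' \<in> {1..k}" "I m = I m'" for m m'
    using sl_inj[of m "nz_set n \<xi>" m'] that unfolding I_def nz_idx_def k_def by auto
  have Jmem: "J q \<in> {1..n} \<and> \<xi> (J q) = 0" if "q \<in> {1..n-k}" for q
    using sl_mem[OF fin_z, of q n \<xi>] that card_z[of n \<xi>] unfolding J_def z_idx_def k_def
    by (auto simp: z_set_def)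
  have Jinj: "q = q'" if "q \<in> {1..n-k}" "q' \<in> {1..n-k}" "J q = J q'" for q q'
    using sl_inj[of q "z_set n \<xi>" q'] that card_z[of n \<xi>] unfolding J_def z_idx_def k_def by auto
  have gprop: "g p \<in> {1..k} \<and> g p \<noteq> s" if "p \<in> {2..k}" for p
    using that k1 unfolding g_def by auto
  have ginj: "p = p'" if "p \<in> {2..k}" "p' \<in> {2..k}" "g p = g p'" for p p'
    using that k1 unfolding g_def by (auto split: if_splits)
  have v1: "v 1 = \<xi>" unfolding v_def xi_vec_def by simp
  have vmid: "v p = \<xi>(I (g p) := - \<xi> (I (g p)))" if "p \<in> {2..k}" for p
    using that k1 unfolding v_def xi_vec_def Let_def g_def I_def k_def[symmetric] by auto
  have vhi: "v p = \<xi>(I s := 0, J (p-k) := \<xi> (I s))" if "k < p" for p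
    using that k1 assms(3) unfolding v_def xi_vec_def Let_def I_def J_def k_def[symmetric] by auto
  have Is: "I s \<in> {1..n} \<and> \<xi> (I s) \<noteq> 0" using Imem[of s] k1 assms(3) by auto
  show ?thesis unfolding lin_indep_family_def v_def[symmetric]
  proof (intro allI impI ballI)
    fix c :: "nat \<Rightarrow> real" and p
    assume H: "\<forall>i\<in>{1..n}. (\<Sum>p = 1..n. c p * real_of_int (v p i)) = 0" and p: "p \<in> {1..n}"
    have split: "(\<Sum>q=1..n. c q * real_of_int (v q x)) =
        (\<Sum>q=1..k. c q * real_of_int (v q x)) + (\<Sum>q=k+1..n. c q * real_of_int (v q x))" for x
      using sum.ub_add_nat[of 1 k "\<lambda>q. c q * real_of_int (v q x)" "n - k"] k1 kn by simp
    have hi0: "\<forall>q\<in>{k+1..n}. c q = 0"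
    proof
      fix q assume q: "q \<in> {k+1..n}"
      define x where "x = J (q - k)"
      have qk: "q - k \<in> {1..n-k}" using q by auto
      have xm: "x \<in> {1..n}" "\<xi> x = 0" using Jmem[OF qk] unfolding x_def by auto
      have low: "\<forall>r\<in>{1..k}. v r x = 0"
      proof
        fix r assume r: "r \<in> {1..k}"
        show "v r x = 0"
        proof (cases "r = 1")
          case True then show ?thesis using v1 xm by simp
        next
          case False
          then have r2: "r \<in> {2..k}" using r by auto
          then have "I (g r) \<noteq> x" using Imem[of "g r"] gprop[of r] xm by auto
          then show ?thesis using vmid[OF r2] xm by simp
        qed
      qed
      have high: "\<forall>r\<in>{k+1..n}. v r x = (if r = q then \<xi> (I s) else 0)"
      proof
        fix r assume r: "r \<in> {k+1..n}"
        have "I s \<noteq> x" using Is xm by auto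
        moreover have "J (r - k) = x \<longleftrightarrow> r = q"
        proof
          assume "J (r - k) = x"
          moreover have "r - k \<in> {1..n-k}" using r by auto
          ultimately have "r - k = q - k" using Jinj[of "r-k" "q-k"] qk unfolding x_def by auto
          then show "r = q" using r q by auto
        qed (simp add: x_def)
        ultimately show "v r x = (if r = q then \<xi> (I s) else 0)"
          using vhi[of r] r xm by auto
      qed
      have "(\<Sum>r=1..k. c r * real_of_int (v r x)) = 0" using low by simp
      moreover have "(\<Sum>r=k+1..n. c r * real_of_int (v r x)) = c q * real_of_int (\<xi> (I s))"
      proof -
        have "(\<Sum>r=k+1..n. c r * real_of_int (v r x)) =
              (\<Sum>r=k+1..n. if r = q then c q * real_of_int (\<xi> (I s)) else 0)"
          by (rule sum.cong) (use high in auto)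
        also have "\<dots> = c q * real_of_int (\<xi> (I s))" using q by simp
        finally show ?thesis .
      qed
      ultimately have "c q * real_of_int (\<xi> (I s)) = 0" using H xm split[of x] by simp
      then show "c q = 0" using Is by simp
    qed
    have red: "(\<Sum>q=1..k. c q * real_of_int (v q x)) = 0" if "x \<in> {1..n}" for x
    proof -
      have "(\<Sum>q=k+1..n. c q * real_of_int (v q x)) = 0" using hi0 by simp
      then show ?thesis using H that split[of x] by simp
    qed
    define S where "S = (\<Sum>q=1..k. c q)"
    have S0: "S = 0"
    proof -
      have "\<forall>q\<in>{1..k}. v q (I s) = \<xi> (I s)"
      proof
        fix q assume q: "q \<in> {1..k}"
        show "v q (I s) = \<xi> (I s)"
        proof (cases "q = 1")
          case True then show ?thesis using v1 by simp
        next
          case False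
          then have q2: "q \<in> {2..k}" using q by auto
          then have "I (g q) \<noteq> I s" using Iinj[of "g q" s] gprop[of q] k1 assms(3) by auto
          then show ?thesis using vmid[OF q2] by simp
        qed
      qed
      then have "(\<Sum>q=1..k. c q * real_of_int (v q (I s))) = (\<Sum>q=1..k. c q * real_of_int (\<xi> (I s)))"
        by simp
      also have "\<dots> = S * real_of_int (\<xi> (I s))" unfolding S_def by (simp add: sum_distrib_right)
      finally show ?thesis using red[of "I s"] Is by simp
    qed
    have mid0: "c p' = 0" if p': "p' \<in> {2..k}" for p'
    proof -
      define x where "x = I (g p')"
      have xm: "x \<in> {1..n}" "\<xi> x \<noteq> 0" using Imem[of "g p'"] gprop[OF p'] unfolding x_def by auto
      have "\<forall>q\<in>{1..k}. v q x = (if q = p' then - \<xi> x else \<xi> x)"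
      proof
        fix q assume q: "q \<in> {1..k}"
        show "v q x = (if q = p' then - \<xi> x else \<xi> x)"
        proof (cases "q = 1")
          case True then show ?thesis using v1 p' by simp
        next
          case False
          then have q2: "q \<in> {2..k}" using q by auto
          have "I (g q) = x \<longleftrightarrow> q = p'"
            using Iinj[of "g q" "g p'"] gprop[OF q2] gprop[OF p'] ginj[OF q2 p'] unfolding x_def by auto
          then show ?thesis using vmid[OF q2] by auto
        qed
      qed
      then have "(\<Sum>q=1..k. c q * real_of_int (v q x)) =
          (\<Sum>q=1..k. c q * real_of_int (\<xi> x) - (if q = p' then 2 * c p' * real_of_int (\<xi> x) else 0))"
        by (intro sum.cong) auto
      also have "\<dots> = S * real_of_int (\<xi> x) - 2 * c p' * real_of_int (\<xi> x)"
        using p' unfolding S_def by (simp add: sum_subtractf sum_distrib_right)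
      finally show ?thesis using red[OF xm(1)] S0 xm(2) by simp
    qed
    have c1: "c 1 = 0"
    proof -
      have "S = c 1 + (\<Sum>q=2..k. c q)" unfolding S_def using k1
        by (simp add: sum.atLeast_Suc_atMost numeral_2_eq_2)
      moreover have "(\<Sum>q=2..k. c q) = 0" using mid0 by simp
      ultimately show ?thesis using S0 by simp
    qed
    show "c p = 0"
    proof -
      consider "p = 1" | "p \<in> {2..k}" | "p \<in> {k+1..n}" using p by force
      then show ?thesis using c1 mid0 hi0 by cases auto
    qed
  qed
qed

end
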